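(* Let $w\ge5$ and $n$ be integers, and let $B\subseteq[n-1]$ be a set with largest element $b$ (with $b=0$ if $B$ is empty). If $n\ge w(2b+w^2)$, then there exists a $B$-free $(n,w-1)$ modular Golomb ruler.
   Context: An $(n,w)$ modular Golomb ruler is a set of $w$ elements $\{a_1,\dots,a_w\}\subseteq\mathbb Z_n$ such that all differences $a_i-a_j$ ($1\le i\ne j\le w$), computed in $\mathbb Z_n$, are nonzero and pairwise distinct; this set of differences is its set of differences. For a finite set $B\subseteq[n-1]=\{1,\dots,n-1\}$, a modular Golomb ruler is $B$-free if no element of $B$, viewed as an element of $\mathbb Z_n$, lies in its set of differences. *)

theory Defs
  imports Main
begin

text \<open>Elements of Z_n are represented by integers in {0..<n}; subtraction in Z_n
is (x - y) mod n.\<close>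

definition offdiag :: "int set \<Rightarrow> (int \<times> int) set" where
  "offdiag A = {(a, a'). a \<in> A \<and> a' \<in> A \<and> a \<noteq> a'}"

definition diff_set :: "int \<Rightarrow> int set \<Rightarrow> int set" where
  "diff_set n A = (\<lambda>(a, a'). (a - a') mod n) ` offdiag A"

definition modular_golomb_ruler :: "int \<Rightarrow> nat \<Rightarrow> int set \<Rightarrow> bool" where
  "modular_golomb_ruler n w A \<longleftrightarrow>
     A \<subseteq> {0..<n} \<and> finite A \<and> card A = w \<and>
     (\<forall>p \<in> offdiag A. (fst p - snd p) mod n \<noteq> 0) \<and>
     inj_on (\<lambda>(a, a'). (a - a') mod n) (offdiag A)"

definition B_free :: "int \<Rightarrow> int set \<Rightarrow> int set \<Rightarrow> bool" where
  "B_free n B A \<longleftrightarrow> (\<forall>x \<in> B. x mod n \<notin> diff_set n A)"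

end

theory Submission
  imports Defs
begin

lemma rng:
  fixes n a a' :: int
  assumes "a \<in> {0..<n}" "a' \<in> {0..<n}" "n dvd a - a'"
  shows "a = a'"
proof -
  have "a mod n = a" "a' mod n = a'" using assms(1,2) by (simp_all add: mod_pos_pos_trivial)
  moreover have "a mod n = a' mod n" using assms(3) by (simp add: mod_eq_dvd_iff)
  ultimately show ?thesis by metis
qed

lemma aux_x:
  fixes n x :: int
  assumes sub: "A \<subseteq> {0..<n}" and xr: "x \<in> {0..<n}"
    and H1: "\<forall>a\<in>A. \<forall>c\<in>A. \<forall>c'\<in>A. \<not> n dvd x - (a + c - c')"
    and H2: "\<forall>a\<in>A. \<forall>a'\<in>A. \<not> n dvd 2*x - (a + a')"
    and p: "p \<in> offdiag (insert x A)" and q: "q \<in> offdiag (insert x A)"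
    and px: "fst p = x \<or> snd p = x"
    and D: "n dvd (fst p - snd p) - (fst q - snd q)"
  shows "p = q"
proof -
  obtain p1 p2 q1 q2 where pq: "p = (p1,p2)" "q = (q1,q2)" by (cases p, cases q) auto
  have xA: "x \<notin> A"
  proof
    assume "x \<in> A" with H2 have "\<not> n dvd 2*x - (x + x)" by blast
    thus False by simp
  qed
  from p q pq have P: "p1 \<in> insert x A" "p2 \<in> insert x A" "p1 \<noteq> p2"
    and Q: "q1 \<in> insert x A" "q2 \<in> insert x A" "q1 \<noteq> q2"
    by (auto simp: offdiag_def)
  from D pq have D': "n dvd (p1 - p2) - (q1 - q2)" by simp
  have ins: "insert x A \<subseteq> {0..<n}" using sub xr by auto
  show ?thesis
  proof (cases "p1 = x")
    case True
    then have p2A: "p2 \<in> A" using P by auto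
    show ?thesis
    proof (cases "q1 = x")
      case True
      then have "q2 \<in> A" using Q by auto
      have "n dvd q2 - p2" using D' \<open>p1 = x\<close> True by simp
      then have "q2 = p2" using rng[of q2 n p2] subsetD[OF sub \<open>q2 \<in> A\<close>] subsetD[OF sub p2A] by blast
      then show ?thesis using pq True \<open>p1 = x\<close> by simp
    next
      case False
      note q1F = False
      show ?thesis
      proof (cases "q2 = x")
        case True
        then have "q1 \<in> A" using Q q1F by auto
        have "(p1 - p2) - (q1 - q2) = 2*x - (p2 + q1)" using True \<open>p1 = x\<close> by simp
        then have "n dvd 2*x - (p2 + q1)" using D' by metis
        then show ?thesis using H2 p2A \<open>q1 \<in> A\<close> by blast
      next
        case False
        then have "q1 \<in> A" "q2 \<in> A" using Q q1F by auto
        have "(p1 - p2) - (q1 - q2) = x - (p2 + q1 - q2)" using \<open>p1 = x\<close> by simp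
        then have "n dvd x - (p2 + q1 - q2)" using D' by metis
        then show ?thesis using H1 p2A \<open>q1 \<in> A\<close> \<open>q2 \<in> A\<close> by blast
      qed
    qed
  next
    case False
    note p1F = False
    then have p2x: "p2 = x" using px pq by simp
    then have p1A: "p1 \<in> A" using P p1F by auto
    show ?thesis
    proof (cases "q2 = x")
      case True
      then have "q1 \<in> A" using Q by auto
      have "n dvd p1 - q1" using D' p2x True by simp
      then have "p1 = q1" using rng[of p1 n q1] subsetD[OF sub \<open>q1 \<in> A\<close>] subsetD[OF sub p1A] by blast
      then show ?thesis using pq True p2x by simp
    next
      case False
      note q2F = False
      show ?thesis
      proof (cases "q1 = x")
        case True
        then have "q2 \<in> A" using Q q2F by auto
        have "(p1 - p2) - (q1 - q2) = - (2*x - (p1 + q2))" using True p2x by simp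
        then have "n dvd 2*x - (p1 + q2)" using D' by (metis dvd_minus_iff)
        then show ?thesis using H2 p1A \<open>q2 \<in> A\<close> by blast
      next
        case False
        then have "q1 \<in> A" "q2 \<in> A" using Q q2F by auto
        have "(p1 - p2) - (q1 - q2) = - (x - (p1 + q2 - q1))" using p2x by simp
        then have "n dvd x - (p1 + q2 - q1)" using D' by (metis dvd_minus_iff)
        then show ?thesis using H1 p1A \<open>q1 \<in> A\<close> \<open>q2 \<in> A\<close> by blast
      qed
    qed
  qed
qed

definition good :: "int \<Rightarrow> int set \<Rightarrow> int set \<Rightarrow> bool" where
  "good n B A \<longleftrightarrow> A \<subseteq> {0..<n} \<and> finite A \<and>
     inj_on (\<lambda>(a, a'). (a - a') mod n) (offdiag A) \<and> B_free n B A"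

lemma step:
  fixes n x :: int
  assumes g: "good n B A" and xr: "x \<in> {0..<n}"
    and H1: "\<forall>a\<in>A. \<forall>c\<in>A. \<forall>c'\<in>A. \<not> n dvd x - (a + c - c')"
    and H2: "\<forall>a\<in>A. \<forall>a'\<in>A. \<not> n dvd 2*x - (a + a')"
    and H4: "\<forall>a\<in>A. \<forall>\<beta>\<in>B. \<not> n dvd x - (a + \<beta>) \<and> \<not> n dvd x - (a - \<beta>)"
  shows "x \<notin> A" "good n B (insert x A)"
proof -
  show xA: "x \<notin> A"
  proof
    assume "x \<in> A" with H2 have "\<not> n dvd 2*x - (x + x)" by blast
    thus False by simp
  qed
  from g have sub: "A \<subseteq> {0..<n}" and fin: "finite A"
    and inj: "inj_on (\<lambda>(a, a'). (a - a') mod n) (offdiag A)" and bf: "B_free n B A"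
    by (auto simp: good_def)
  have inj2: "inj_on (\<lambda>(a, a'). (a - a') mod n) (offdiag (insert x A))"
  proof (rule inj_onI)
    fix p q assume p: "p \<in> offdiag (insert x A)" and q: "q \<in> offdiag (insert x A)"
      and eq: "(\<lambda>(a, a'). (a - a') mod n) p = (\<lambda>(a, a'). (a - a') mod n) q"
    obtain p1 p2 q1 q2 where pq: "p = (p1,p2)" "q = (q1,q2)" by (cases p, cases q) auto
    from eq pq have "(p1 - p2) mod n = (q1 - q2) mod n" by simp
    then have D: "n dvd (fst p - snd p) - (fst q - snd q)" using pq by (simp add: mod_eq_dvd_iff)
    show "p = q"
    proof (cases "fst p = x \<or> snd p = x")
      case True
      show ?thesis using aux_x[OF sub xr H1 H2 p q True D] .
    next
      case F1: False
      show ?thesis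
      proof (cases "fst q = x \<or> snd q = x")
        case True
        have D2: "n dvd (fst q - snd q) - (fst p - snd p)" using D
          by (metis dvd_minus_iff minus_diff_eq)
        show ?thesis using aux_x[OF sub xr H1 H2 q p True D2] by simp
      next
        case False
        then have "p \<in> offdiag A" "q \<in> offdiag A" using p q F1 by (auto simp: offdiag_def)
        then show ?thesis using inj eq by (meson inj_onD)
      qed
    qed
  qed
  have bf2: "B_free n B (insert x A)"
    unfolding B_free_def diff_set_def
  proof (intro ballI notI)
    fix \<beta> assume b: "\<beta> \<in> B" and m: "\<beta> mod n \<in> (\<lambda>(a, a'). (a - a') mod n) ` offdiag (insert x A)"
    then obtain p1 p2 where pp: "(p1,p2) \<in> offdiag (insert x A)" and e: "\<beta> mod n = (p1 - p2) mod n"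
      by auto
    then have D: "n dvd \<beta> - (p1 - p2)" by (simp add: mod_eq_dvd_iff)
    from pp have P: "p1 \<in> insert x A" "p2 \<in> insert x A" "p1 \<noteq> p2" by (auto simp: offdiag_def)
    show False
    proof (cases "p1 = x")
      case True
      then have "p2 \<in> A" using P by auto
      have "x - (p2 + \<beta>) = - (\<beta> - (p1 - p2))" using True by simp
      then have "n dvd x - (p2 + \<beta>)" using D by (metis dvd_minus_iff)
      then show False using H4 \<open>p2 \<in> A\<close> b by blast
    next
      case F: False
      show False
      proof (cases "p2 = x")
        case True
        then have "p1 \<in> A" using P F by auto
        have "x - (p1 - \<beta>) = \<beta> - (p1 - p2)" using True by simp
        then have "n dvd x - (p1 - \<beta>)" using D by metis
        then show False using H4 \<open>p1 \<in> A\<close> b by blast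
      next
        case False
        then have "(p1,p2) \<in> offdiag A" using pp F by (auto simp: offdiag_def)
        then have "\<beta> mod n \<in> diff_set n A" using e unfolding diff_set_def by force
        then show False using bf b unfolding B_free_def by blast
      qed
    qed
  qed
  show "good n B (insert x A)" using sub xr fin inj2 bf2 by (simp add: good_def)
qed


lemma two_sol:
  fixes n c :: int
  assumes "n > 0"
  shows "card {y\<in>{0..<n}. (2*y) mod n = c} \<le> 2"
proof (cases "{y\<in>{0..<n}. (2*y) mod n = c} = {}")
  case True then show ?thesis by (simp only: card.empty)
next
  case False
  define S where "S = {y\<in>{0..<n}. (2*y) mod n = c}"
  have finS: "finite S" unfolding S_def by (rule finite_subset[of _ "{0..<n}"]) auto
  have ne: "S \<noteq> {}" using False S_def by simp
  define x0 where "x0 = Min S"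
  have x0S: "x0 \<in> S" using finS ne x0_def by simp
  have "S \<subseteq> {x0, x0 + n div 2}"
  proof
    fix y assume yS: "y \<in> S"
    have le: "x0 \<le> y" using finS yS x0_def by simp
    have "(2*y) mod n = (2*x0) mod n" using yS x0S S_def by simp
    then have "n dvd 2*y - 2*x0" by (simp add: mod_eq_dvd_iff)
    then obtain k where k: "2*y - 2*x0 = n*k" by (elim dvdE)
    have yr: "y < n" "x0 \<ge> 0" using yS x0S S_def by auto
    have k0: "k \<ge> 0"
    proof (rule ccontr)
      assume "\<not> k \<ge> 0" then have "n*k < 0" using assms by (simp add: mult_pos_neg)
      then show False using k le by linarith
    qed
    have k2: "k < 2"
    proof (rule ccontr)
      assume "\<not> k < 2" then have "n*k \<ge> n*2" using assms by simp
      then show False using k yr by linarith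
    qed
    have "k = 0 \<or> k = 1" using k0 k2 by linarith
    then show "y \<in> {x0, x0 + n div 2}"
    proof
      assume "k = 0" then show ?thesis using k by simp
    next
      assume "k = 1" then have "2*(y - x0) = n" using k by simp
      then have "y - x0 = n div 2" by auto
      then show ?thesis by simp
    qed
  qed
  then have "card S \<le> card {x0, x0 + n div 2}" by (simp add: card_mono)
  also have "\<dots> \<le> 2" by (simp add: card_insert_if)
  finally show ?thesis using S_def by simp
qed


lemma arith_bound:
  fixes K W b cB n :: int
  assumes "0 \<le> K" "K \<le> W - 2" "0 \<le> cB" "cB \<le> b" "n \<ge> W * (2 * b + W ^ 2)"
  shows "K^3 + 2*K^2 + 2*K*cB < n"
proof -
  have W0: "W > 0" using assms by linarith
  have "K^2 < W^2" using assms by (intro power_strict_mono) auto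
  then have "K^2 * W < W^2 * W" using W0 by simp
  moreover have "K^2 * (K + 2) \<le> K^2 * W" using assms by (intro mult_left_mono) auto
  moreover have "K * cB \<le> W * b" using assms by (intro mult_mono) auto
  ultimately have "K^3 + 2*K^2 + 2*K*cB < W^3 + 2*W*b"
    by (simp add: power2_eq_square power3_eq_cube algebra_simps)
  also have "\<dots> \<le> n" using assms(5) by (simp add: power2_eq_square power3_eq_cube algebra_simps)
  finally show ?thesis .
qed

lemma grow:
  fixes n b :: int and w :: nat
  assumes g: "good n B A" and cA: "card A + 2 \<le> w"
    and Bs: "B \<subseteq> {1..n-1}"
    and bdef: "b = (if B = {} then 0 else Max B)"
    and nb: "n \<ge> int w * (2 * b + int w ^ 2)"
  shows "\<exists>x. x \<notin> A \<and> good n B (insert x A)"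
proof -
  from g have sub: "A \<subseteq> {0..<n}" and fin: "finite A" by (auto simp: good_def)
  have finB: "finite B" using Bs finite_subset by blast
  have b0: "b \<ge> 0" 
  proof (cases "B = {}")
    case False
    then have "Max B \<in> B" using finB by simp
    then show ?thesis using Bs bdef False by auto
  qed (use bdef in simp)
  have cB: "int (card B) \<le> b"
  proof (cases "B = {}")
    case True then show ?thesis using b0 by simp
  next
    case False
    have "B \<subseteq> {1..b}" using False bdef Bs finB by auto
    then have "card B \<le> card {1..b}" by (intro card_mono) auto
    then show ?thesis using b0 by simp
  qed
  define F1 where "F1 = (\<lambda>(a,c,c'). (a+c-c') mod n) ` (A \<times> A \<times> A)"
  define F2 where "F2 = (\<Union>p\<in>A \<times> A. {y\<in>{0..<n}. (2*y) mod n = (fst p + snd p) mod n})"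
  define F3 where "F3 = (\<lambda>(a,\<beta>). (a+\<beta>) mod n) ` (A \<times> (B \<union> uminus ` B))"
  have w0: "int w > 0" using cA by simp
  have "2 * b + int w ^ 2 > 0" using b0 w0 by (simp add: add_nonneg_pos)
  then have n0: "n > 0" using nb w0 mult_pos_pos[OF w0] by (meson less_le_trans)
  define k where "k = card A"
  have c1: "card F1 \<le> k^3"
  proof -
    have "card F1 \<le> card (A \<times> A \<times> A)" unfolding F1_def by (rule card_image_le) (simp add: fin)
    also have "\<dots> = k^3" by (simp add: card_cartesian_product k_def power3_eq_cube)
    finally show ?thesis .
  qed
  have c2: "card F2 \<le> 2 * k^2"
  proof -
    have "card F2 \<le> (\<Sum>p\<in>A \<times> A. card {y\<in>{0..<n}. (2*y) mod n = (fst p + snd p) mod n})"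
      unfolding F2_def by (rule card_UN_le) (simp add: fin)
    also have "\<dots> \<le> (\<Sum>p\<in>A \<times> A. 2)" by (rule sum_mono) (rule two_sol[OF n0])
    also have "\<dots> = 2 * k^2" by (simp add: card_cartesian_product k_def power2_eq_square)
    finally show ?thesis .
  qed
  have c3: "card F3 \<le> 2 * k * card B"
  proof -
    have "card F3 \<le> card (A \<times> (B \<union> uminus ` B))" unfolding F3_def by (rule card_image_le) (simp add: fin finB)
    also have "\<dots> = k * card (B \<union> uminus ` B)" by (simp add: card_cartesian_product k_def)
    also have "\<dots> \<le> k * (2 * card B)"
    proof -
      have "card (B \<union> uminus ` B) \<le> card B + card (uminus ` B)" by (rule card_Un_le)
      also have "\<dots> \<le> 2 * card B" using card_image_le[OF finB, of uminus] by simp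
      finally show ?thesis by simp
    qed
    finally show ?thesis by simp
  qed
  have "card (F1 \<union> F2 \<union> F3) \<le> card F1 + card F2 + card F3"
    by (meson card_Un_le add_le_mono order_trans le_refl)
  then have "card (F1 \<union> F2 \<union> F3) \<le> k^3 + 2 * k^2 + 2 * k * card B"
    using c1 c2 c3 by linarith
  then have "int (card (F1 \<union> F2 \<union> F3)) \<le> int (k^3 + 2 * k^2 + 2 * k * card B)"
    by (simp only: of_nat_le_iff)
  then have cF: "int (card (F1 \<union> F2 \<union> F3)) \<le> int k^3 + 2 * int k^2 + 2 * int k * int (card B)"
    by simp
  have "int k^3 + 2 * int k^2 + 2 * int k * int (card B) < n"
    by (rule arith_bound[OF _ _ _ cB nb]) (use cA k_def in auto)
  with cF have lt: "card (F1 \<union> F2 \<union> F3) < card {0..<n}" using n0 by simp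
  have "\<not> {0..<n} \<subseteq> F1 \<union> F2 \<union> F3"
  proof
    assume H: "{0..<n} \<subseteq> F1 \<union> F2 \<union> F3"
    have f2: "finite F2" unfolding F2_def using fin
    proof (intro finite_UN_I)
      fix p show "finite {y\<in>{0..<n}. (2*y) mod n = (fst p + snd p) mod n}"
        by (rule finite_subset[of _ "{0..<n}"]) auto
    qed (simp add: fin)
    have "finite (F1 \<union> F3)" unfolding F1_def F3_def using fin finB by auto
    then have "finite (F1 \<union> F2 \<union> F3)" using f2 by auto
    then have "card {0..<n} \<le> card (F1 \<union> F2 \<union> F3)" using H by (rule card_mono)
    with lt show False by simp
  qed
  then obtain x where xr: "x \<in> {0..<n}" and xF: "x \<notin> F1 \<union> F2 \<union> F3" by blast
  have xm: "x mod n = x" using xr by (simp add: mod_pos_pos_trivial)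
  have H1: "\<forall>a\<in>A. \<forall>c\<in>A. \<forall>c'\<in>A. \<not> n dvd x - (a + c - c')"
  proof (intro ballI notI)
    fix a c c' assume m: "a \<in> A" "c \<in> A" "c' \<in> A" and d: "n dvd x - (a + c - c')"
    then have "x = (a + c - c') mod n" using xm by (metis mod_eq_dvd_iff)
    then have "x \<in> F1" unfolding F1_def using m by force
    then show False using xF by simp
  qed
  have H2: "\<forall>a\<in>A. \<forall>a'\<in>A. \<not> n dvd 2*x - (a + a')"
  proof (intro ballI notI)
    fix a a' assume m: "a \<in> A" "a' \<in> A" and d: "n dvd 2*x - (a + a')"
    then have "(2*x) mod n = (a + a') mod n" by (metis mod_eq_dvd_iff)
    then have "x \<in> F2" unfolding F2_def using m xr by force
    then show False using xF by simp
  qed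
  have H4: "\<forall>a\<in>A. \<forall>\<beta>\<in>B. \<not> n dvd x - (a + \<beta>) \<and> \<not> n dvd x - (a - \<beta>)"
  proof (intro ballI conjI notI)
    fix a \<beta> assume m: "a \<in> A" "\<beta> \<in> B" and d: "n dvd x - (a + \<beta>)"
    then have "x = (a + \<beta>) mod n" using xm by (metis mod_eq_dvd_iff)
    then have "x \<in> F3" unfolding F3_def using m by force
    then show False using xF by simp
  next
    fix a \<beta> assume m: "a \<in> A" "\<beta> \<in> B" and d: "n dvd x - (a - \<beta>)"
    then have "x = (a + (- \<beta>)) mod n" using xm by (metis mod_eq_dvd_iff diff_conv_add_uminus)
    moreover have "(a, - \<beta>) \<in> A \<times> (B \<union> uminus ` B)" using m by auto
    ultimately have "x \<in> F3" unfolding F3_def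
      using rev_image_eqI[of "(a, - \<beta>)" "A \<times> (B \<union> uminus ` B)" x "\<lambda>(a,\<beta>). (a+\<beta>) mod n"] by simp
    then show False using xF by simp
  qed
  show ?thesis using step[OF g xr H1 H2 H4] by blast
qed


lemma good_empty: "good n B {}"
  by (simp add: good_def offdiag_def B_free_def diff_set_def)

lemma build:
  fixes n b :: int and w :: nat
  assumes Bs: "B \<subseteq> {1..n-1}"
    and bdef: "b = (if B = {} then 0 else Max B)"
    and nb: "n \<ge> int w * (2 * b + int w ^ 2)"
  shows "k + 1 \<le> w \<Longrightarrow> \<exists>A. good n B A \<and> card A = k"
proof (induction k)
  case 0 then show ?case using good_empty by fastforce
next
  case (Suc k)
  then obtain A where A: "good n B A" "card A = k" by auto
  then have "card A + 2 \<le> w" using Suc.prems by simp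
  then obtain x where x: "x \<notin> A" "good n B (insert x A)" using grow[OF A(1) _ Bs bdef nb] by blast
  have "finite A" using A(1) by (simp add: good_def)
  then have "card (insert x A) = Suc k" using x(1) A(2) by simp
  then show ?case using x(2) by blast
qed

theorem lemma2:
  fixes w :: nat and n b :: int and B :: "int set"
  assumes "w \<ge> 5"
    and "B \<subseteq> {1..n-1}"
    and "b = (if B = {} then 0 else Max B)"
    and "n \<ge> int w * (2 * b + int w ^ 2)"
  shows "\<exists>A. modular_golomb_ruler n (w - 1) A \<and> B_free n B A"
proof -
  obtain A where A: "good n B A" "card A = w - 1"
    using build[OF assms(2,3,4), of "w - 1"] assms(1) by auto
  from A(1) have sub: "A \<subseteq> {0..<n}" and fin: "finite A"
    and inj: "inj_on (\<lambda>(a, a'). (a - a') mod n) (offdiag A)" and bf: "B_free n B A"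
    by (auto simp: good_def)
  have nz: "\<forall>p \<in> offdiag A. (fst p - snd p) mod n \<noteq> 0"
  proof (intro ballI notI)
    fix p assume p: "p \<in> offdiag A" and z: "(fst p - snd p) mod n = 0"
    then have "fst p \<in> A" "snd p \<in> A" "fst p \<noteq> snd p" by (auto simp: offdiag_def)
    moreover have "n dvd fst p - snd p" using z by (simp add: mod_0_imp_dvd)
    ultimately show False using rng[of "fst p" n "snd p"] sub by blast
  qed
  show ?thesis unfolding modular_golomb_ruler_def using sub fin A(2) nz inj bf by blast
qed

end
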